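(* With $\tau=\frac{1}{4(n-1)}\left(u_2-\frac{n-2}{2(n-1)}u_1^2\right)$, $e=\frac{\partial}{\partial u_{n-1}}$, and $E^i:=\sum_j g^{ij}\frac{\partial\tau}{\partial u_j}$, one has $E^i=\sum_{l,j}g^{il}\eta_{lj}e^j$ for all $i$.
   Context: $n\ge2$. $u_k=\sum_{1\le i_1<\dots<i_k\le n}p_{i_1}^2\cdots p_{i_k}^2$ ($k=1,\dots,n$), $u_0=1$, $u_k=0$ for $k<0$ or $k>n$, coordinates on $\mathbb{C}^n/B_n$. $g^{ij}(u)=\sum_{k,l}\frac{1-\delta^{kl}}{p_kp_l}\frac{\partial u_i}{\partial p_k}\frac{\partial u_j}{\partial p_l}$, $\eta^{ij}(u)=\frac{\partial g^{ij}}{\partial u_{n-1}}(u)=4(2n-i-j)u_{i+j-n-1}$ (nondegenerate), and $\eta_{ij}$ denotes the inverse matrix of $\eta^{ij}$. *)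

theory Defs
  imports "HOL-Analysis.Analysis"
begin

text \<open>Points p of C^n are functions nat => complex, only the values p 1, ..., p n matter.\<close>

definition uu :: "nat \<Rightarrow> nat \<Rightarrow> (nat \<Rightarrow> complex) \<Rightarrow> complex" where
  "uu n k p = (\<Sum>S\<in>{S. S \<subseteq> {1..n} \<and> card S = k}. \<Prod>i\<in>S. (p i)^2)"

text \<open>u_k for integer k, with u_k = 0 for k < 0 (and automatically u_0 = 1, u_k = 0 for k > n).\<close>
definition uZ :: "nat \<Rightarrow> int \<Rightarrow> (nat \<Rightarrow> complex) \<Rightarrow> complex" where
  "uZ n k p = (if k < 0 then 0 else uu n (nat k) p)"

definition du :: "nat \<Rightarrow> nat \<Rightarrow> nat \<Rightarrow> (nat \<Rightarrow> complex) \<Rightarrow> complex" where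
  "du n i k p = deriv (\<lambda>t. uu n i (p(k := t))) (p k)"

definition gup :: "nat \<Rightarrow> nat \<Rightarrow> nat \<Rightarrow> (nat \<Rightarrow> complex) \<Rightarrow> complex" where
  "gup n i j p = (\<Sum>k\<in>{1..n}. \<Sum>l\<in>{1..n}.
      (if k = l then 0 else 1) / (p k * p l) * du n i k p * du n j l p)"

definition etaup :: "nat \<Rightarrow> nat \<Rightarrow> nat \<Rightarrow> (nat \<Rightarrow> complex) \<Rightarrow> complex" where
  "etaup n i j p = 4 * of_int (2 * int n - int i - int j) * uZ n (int i + int j - int n - 1) p"

definition etalow :: "nat \<Rightarrow> (nat \<Rightarrow> complex) \<Rightarrow> nat \<Rightarrow> nat \<Rightarrow> complex" where
  "etalow n p = (THE M. (\<forall>i j. (i \<notin> {1..n} \<or> j \<notin> {1..n}) \<longrightarrow> M i j = 0) \<and>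
       (\<forall>i\<in>{1..n}. \<forall>j\<in>{1..n}. (\<Sum>l\<in>{1..n}. etaup n i l p * M l j) = (if i = j then 1 else 0)))"

definition tau :: "nat \<Rightarrow> (nat \<Rightarrow> complex) \<Rightarrow> complex" where
  "tau n U = 1 / (4 * (of_nat n - 1)) *
     (U 2 - (of_nat n - 2) / (2 * (of_nat n - 1)) * (U 1)^2)"

definition dtau :: "nat \<Rightarrow> nat \<Rightarrow> (nat \<Rightarrow> complex) \<Rightarrow> complex" where
  "dtau n j p = (let U = (\<lambda>k. uu n k p) in deriv (\<lambda>t. tau n (U(j := t))) (U j))"

definition evec :: "nat \<Rightarrow> nat \<Rightarrow> complex" where
  "evec n j = (if j = n - 1 then 1 else 0)"

definition EE :: "nat \<Rightarrow> nat \<Rightarrow> (nat \<Rightarrow> complex) \<Rightarrow> complex" where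
  "EE n i p = (\<Sum>j\<in>{1..n}. gup n i j p * dtau n j p)"

end

theory Submission imports Defs begin

lemma tri_solve:
  fixes A :: "nat \<Rightarrow> nat \<Rightarrow> complex"
  shows "(\<forall>i<m. \<forall>l<i. A i l = 0) \<Longrightarrow> (\<forall>i<m. A i i \<noteq> 0) \<Longrightarrow>
    \<exists>x. \<forall>i<m. (\<Sum>l<m. A i l * x l) = b i"
proof (induction m arbitrary: b)
  case 0
  then show ?case by simp
next
  case (Suc m)
  define xm where "xm = b m / A m m"
  obtain x' where x': "\<forall>i<m. (\<Sum>l<m. A i l * x' l) = b i - A i m * xm"
    using Suc.IH[of "\<lambda>i. b i - A i m * xm"] Suc.prems by auto
  define x where "x = x'(m := xm)"
  have s: "(\<Sum>l<Suc m. A i l * x l) = (\<Sum>l<m. A i l * x' l) + A i m * xm" for i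
    unfolding x_def by (simp add: sum.lessThan_Suc)
  show ?case
  proof (intro exI allI impI)
    fix i assume "i < Suc m"
    show "(\<Sum>l<Suc m. A i l * x l) = b i"
    proof (cases "i < m")
      case True thus ?thesis using s x' by simp
    next
      case False
      then have "i = m" using \<open>i < Suc m\<close> by simp
      have "(\<Sum>l<m. A i l * x' l) = 0" using Suc.prems(1) \<open>i = m\<close> by simp
      thus ?thesis using s \<open>i = m\<close> Suc.prems(2) by (simp add: xm_def)
    qed
  qed
qed

lemma tri_inj:
  fixes A :: "nat \<Rightarrow> nat \<Rightarrow> complex"
  shows "(\<forall>i<m. \<forall>l<i. A i l = 0) \<Longrightarrow> (\<forall>i<m. A i i \<noteq> 0) \<Longrightarrow>
    (\<forall>i<m. (\<Sum>l<m. A i l * x l) = 0) \<Longrightarrow> \<forall>l<m. x l = 0"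
proof (induction m)
  case 0
  then show ?case by simp
next
  case (Suc m)
  have "(\<Sum>l<Suc m. A m l * x l) = 0" using Suc.prems(3) by simp
  moreover have "(\<Sum>l<m. A m l * x l) = 0" using Suc.prems(1) by simp
  ultimately have "A m m * x m = 0" by (simp add: sum.lessThan_Suc)
  hence xm: "x m = 0" using Suc.prems(2) by simp
  have "\<forall>i<m. (\<Sum>l<m. A i l * x l) = 0"
  proof (intro allI impI)
    fix i assume "i < m"
    have "(\<Sum>l<Suc m. A i l * x l) = 0" using Suc.prems(3) \<open>i<m\<close> by simp
    thus "(\<Sum>l<m. A i l * x l) = 0" using xm by (simp add: sum.lessThan_Suc)
  qed
  hence "\<forall>l<m. x l = 0" using Suc.IH Suc.prems by simp
  show ?case
  proof (intro allI impI)
    fix l assume "l < Suc m"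
    hence "l < m \<or> l = m" by linarith
    thus "x l = 0" using xm \<open>\<forall>l<m. x l = 0\<close> by blast
  qed
qed

lemma uu0: "uu n 0 p = 1"
proof -
  have "{S. S \<subseteq> {1..n} \<and> card S = 0} = {{}}"
    using finite_subset by fastforce
  thus ?thesis by (simp add: uu_def)
qed

lemma sum_shift: "(\<Sum>l\<in>{1..n}. f l) = (\<Sum>l<n. f (Suc l))"
proof -
  have "{1..n} = Suc ` {..<n}" by (simp add: image_Suc_lessThan)
  thus ?thesis by (simp add: sum.reindex)
qed

definition AA where "AA n p i l = etaup n (n - i) (Suc l) p"

lemma AA_tri: "i < n \<Longrightarrow> l < i \<Longrightarrow> AA n p i l = 0"
  unfolding AA_def etaup_def uZ_def by (simp add: of_nat_diff)

lemma AA_diag: "n \<ge> 2 \<Longrightarrow> i < n \<Longrightarrow> AA n p i i \<noteq> 0"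
  unfolding AA_def etaup_def uZ_def by (simp add: of_nat_diff uu0)

lemma eta_inj:
  assumes "n \<ge> 2" "\<forall>i\<in>{1..n}. (\<Sum>l\<in>{1..n}. etaup n i l p * x l) = 0"
  shows "\<forall>l\<in>{1..n}. x l = 0"
proof -
  have "\<forall>i<n. (\<Sum>l<n. AA n p i l * x (Suc l)) = 0"
  proof (intro allI impI)
    fix i assume "i < n"
    hence "n - i \<in> {1..n}" by auto
    hence "(\<Sum>l\<in>{1..n}. etaup n (n - i) l p * x l) = 0" using assms(2) by blast
    thus "(\<Sum>l<n. AA n p i l * x (Suc l)) = 0" unfolding sum_shift AA_def .
  qed
  hence "\<forall>l<n. x (Suc l) = 0"
    using tri_inj[of n "AA n p" "\<lambda>l. x (Suc l)"] AA_tri AA_diag assms(1) by blast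
  show ?thesis
  proof
    fix l assume l: "l \<in> {1..n}"
    hence "l - 1 < n" "Suc (l - 1) = l" by auto
    hence "x (Suc (l - 1)) = 0" using \<open>\<forall>l<n. x (Suc l) = 0\<close> by blast
    thus "x l = 0" using \<open>Suc (l - 1) = l\<close> by (simp only:)
  qed
qed

lemma eta_surj:
  assumes "n \<ge> 2"
  shows "\<exists>x. \<forall>i\<in>{1..n}. (\<Sum>l\<in>{1..n}. etaup n i l p * x l) = b i"
proof -
  obtain y where y: "\<forall>i<n. (\<Sum>l<n. AA n p i l * y l) = b (n - i)"
    using tri_solve[of n "AA n p" "\<lambda>i. b (n - i)"] AA_tri AA_diag assms by blast
  show ?thesis
  proof (intro exI ballI)
    fix i assume i: "i \<in> {1..n}"
    hence "n - i < n" "n - (n - i) = i" by auto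
    thus "(\<Sum>l\<in>{1..n}. etaup n i l p * (\<lambda>l. y (l - 1)) l) = b i"
      using y[rule_format, of "n - i"] unfolding sum_shift AA_def by simp
  qed
qed

lemma dgen1: "((\<lambda>t::complex. c * (a - d * t^2)) has_field_derivative c * (- (d * (2 * x)))) (at x)"
  by (auto intro!: derivative_eq_intros)
lemma dgen2: "((\<lambda>t::complex. c * (t - e)) has_field_derivative c) (at x)"
  by (auto intro!: derivative_eq_intros)
lemma alg: "(c::complex) - 1 \<noteq> 0 \<Longrightarrow>
  4*(c-1)*(1/(4*(c-1)) * (-((c-2)/(2*(c-1))*(2*u)))) + 4*(c-2)*u*(1/(4*(c-1))) = 0"
proof -
  assume h: "c - 1 \<noteq> 0"
  have "4*(c-1)*(1/(4*(c-1)) * (-((c-2)/(2*(c-1))*(2*u)))) = -((c-2)/(2*(c-1))*(2*u))" using h by simp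
  also have "\<dots> = - ((c-2)*u/(c-1))" using h by (simp add: field_simps)
  finally have a: "4*(c-1)*(1/(4*(c-1)) * (-((c-2)/(2*(c-1))*(2*u)))) = - ((c-2)*u/(c-1))" .
  have "4*(c-2)*u*(1/(4*(c-1))) = (4*((c-2)*u))/(4*(c-1))" by simp
  also have "\<dots> = (c-2)*u/(c-1)" by (rule mult_divide_mult_cancel_left) simp
  finally have b: "4*(c-2)*u*(1/(4*(c-1))) = (c-2)*u/(c-1)" .
  show ?thesis unfolding a b by simp
qed

lemma dtau1: assumes "n \<ge> 2" shows "dtau n (Suc 0) p = 1/(4*(of_nat n-1)) * (- ((of_nat n-2)/(2*(of_nat n-1)) * (2 * uu n 1 p)))"
proof -
  let ?U = "\<lambda>k. uu n k p"
  have f: "(\<lambda>t. tau n (?U(Suc 0:=t))) = (\<lambda>t. 1/(4*(of_nat n-1)) * (uu n 2 p - (of_nat n-2)/(2*(of_nat n-1)) * t^2))"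
    by (simp add: tau_def fun_eq_iff)
  have "((\<lambda>t. 1/(4*(of_nat n-1)) * (uu n 2 p - (of_nat n-2)/(2*(of_nat n-1)) * t^2)) has_field_derivative
     1/(4*(of_nat n-1)) * (- ((of_nat n-2)/(2*(of_nat n-1)) * (2 * uu n 1 p)))) (at (uu n 1 p))"
    by (rule dgen1)
  from DERIV_imp_deriv[OF this] show ?thesis unfolding dtau_def Let_def f by simp
qed

lemma dtau2: assumes "n \<ge> 2" shows "dtau n 2 p = 1/(4*(of_nat n-1))"
proof -
  let ?U = "\<lambda>k. uu n k p"
  have f: "(\<lambda>t. tau n (?U(2:=t))) = (\<lambda>t. 1/(4*(of_nat n-1)) * (t - (of_nat n-2)/(2*(of_nat n-1)) * (uu n 1 p)^2))"
    by (simp add: tau_def fun_eq_iff)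
  have "((\<lambda>t. 1/(4*(of_nat n-1)) * (t - (of_nat n-2)/(2*(of_nat n-1)) * (uu n 1 p)^2)) has_field_derivative
     1/(4*(of_nat n-1))) (at (uu n 2 p))"
    by (rule dgen2)
  thus ?thesis unfolding dtau_def Let_def f by (rule DERIV_imp_deriv)
qed

lemma dtau3: "j \<noteq> 1 \<Longrightarrow> j \<noteq> 2 \<Longrightarrow> dtau n j p = 0"
proof -
  assume "j \<noteq> 1" "j \<noteq> 2"
  let ?U = "\<lambda>k. uu n k p"
  have f: "(\<lambda>t. tau n (?U(j:=t))) = (\<lambda>t. tau n ?U)"
    using \<open>j \<noteq> 1\<close> \<open>j \<noteq> 2\<close> by (simp add: tau_def fun_eq_iff)
  show ?thesis unfolding dtau_def Let_def f by simp
qed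

lemma w_sol:
  assumes "n \<ge> 2" "i \<in> {1..n}"
  shows "(\<Sum>l\<in>{1..n}. etaup n i l p * dtau n l p) = (if i = n - 1 then 1 else 0)"
proof -
  have "{1..n} = {1,2} \<union> {3..n}" using assms(1) by auto
  hence "(\<Sum>l\<in>{1..n}. etaup n i l p * dtau n l p) = etaup n i 1 p * dtau n 1 p + etaup n i 2 p * dtau n 2 p"
    by (simp add: sum.union_disjoint dtau3)
  also have "\<dots> = (if i = n - 1 then 1 else 0)"
  proof -
    have nz: "(of_nat n - 1 :: complex) \<noteq> 0" using assms(1)
    proof -
      have "(of_nat n - 1 :: complex) = of_nat (n - 1)" using assms(1) by (simp add: of_nat_diff)
      thus ?thesis using assms(1) by simp
    qed
    consider "i = n - 1" | "i = n" | "i < n - 1" using assms(2) by fastforce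
    thus ?thesis
    proof cases
      case 1
      then show ?thesis using assms nz by (simp add: etaup_def uZ_def dtau1 dtau2 uu0 of_nat_diff)
    next
      case 2
      have e1: "etaup n i 1 p = 4 * (of_nat n - 1)" using 2 assms(1) by (simp add: etaup_def uZ_def uu0 of_nat_diff)
      have e2: "etaup n i 2 p = 4 * (of_nat n - 2) * uu n 1 p" using 2 assms(1) by (simp add: etaup_def uZ_def of_nat_diff)
      have "i \<noteq> n - 1" using 2 assms(1) by simp
      then show ?thesis unfolding e1 e2 using alg[OF nz, of "uu n 1 p"] dtau1[OF assms(1)] dtau2[OF assms(1)] by simp
    next
      case 3
      have "i < n" using 3 by simp
      have e1: "etaup n i 1 p = 0" using 3 \<open>i < n\<close> assms(1) by (simp add: etaup_def uZ_def)
      have "int i + 1 < int n" using 3 by linarith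
      have e2: "etaup n i 2 p = 0" using 3 \<open>i < n\<close> \<open>int i + 1 < int n\<close> assms(1) by (simp add: etaup_def uZ_def)
      show ?thesis unfolding e1 e2 using 3 by simp
    qed
  qed
  finally show ?thesis .
qed

lemma etalow_col:
  assumes n: "n \<ge> 2"
  shows "\<forall>l\<in>{1..n}. etalow n p l (n - 1) = dtau n l p"
proof -
  define P where "P = (\<lambda>M. (\<forall>i j. (i \<notin> {1..n} \<or> j \<notin> {1..n}) \<longrightarrow> M i j = 0) \<and>
       (\<forall>i\<in>{1..n}. \<forall>j\<in>{1..n}. (\<Sum>l\<in>{1..n}. etaup n i l p * M l j) = (if i = j then 1 else (0::complex))))"
  have "\<forall>j. \<exists>x. \<forall>i\<in>{1..n}. (\<Sum>l\<in>{1..n}. etaup n i l p * x l) = (if i = j then 1 else 0)"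
  proof
    fix j show "\<exists>x. \<forall>i\<in>{1..n}. (\<Sum>l\<in>{1..n}. etaup n i l p * x l) = (if i = j then 1 else 0)"
      using eta_surj[OF n, of p "\<lambda>i. if i = j then 1 else 0"] by simp
  qed
  from choice[OF this] obtain X where X0: "\<forall>j. \<forall>i\<in>{1..n}. (\<Sum>l\<in>{1..n}. etaup n i l p * X j l) = (if i = j then 1 else 0)"
    by blast
  have X: "\<And>j. \<forall>i\<in>{1..n}. (\<Sum>l\<in>{1..n}. etaup n i l p * X j l) = (if i = j then 1 else 0)"
    using X0 by blast
  define M0 where "M0 = (\<lambda>l j. if l \<in> {1..n} \<and> j \<in> {1..n} then X j l else 0)"
  have PM0: "P M0"
    unfolding P_def
  proof (intro conjI allI impI ballI)
    fix i j assume "i \<notin> {1..n} \<or> j \<notin> {1..n}"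
    thus "M0 i j = 0" unfolding M0_def by auto
  next
    fix i j assume i: "i \<in> {1..n}" and j: "j \<in> {1..n}"
    have "(\<Sum>l\<in>{1..n}. etaup n i l p * M0 l j) = (\<Sum>l\<in>{1..n}. etaup n i l p * X j l)"
      using j by (intro sum.cong) (auto simp: M0_def)
    thus "(\<Sum>l\<in>{1..n}. etaup n i l p * M0 l j) = (if i = j then 1 else 0)" using X i by simp
  qed
  have uniq: "M = M0" if PM: "P M" for M
  proof (intro ext)
    fix i j
    show "M i j = M0 i j"
    proof (cases "i \<in> {1..n} \<and> j \<in> {1..n}")
      case False
      have a: "\<forall>i j. (i \<notin> {1..n} \<or> j \<notin> {1..n}) \<longrightarrow> M i j = 0" using PM unfolding P_def by (rule conjunct1)
      have b: "\<forall>i j. (i \<notin> {1..n} \<or> j \<notin> {1..n}) \<longrightarrow> M0 i j = 0" using PM0 unfolding P_def by (rule conjunct1)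
      have "M i j = 0" using a False by blast
      moreover have "M0 i j = 0" using b False by blast
      ultimately show ?thesis by (simp only:)
    next
      case True
      have "\<forall>k\<in>{1..n}. (\<Sum>l\<in>{1..n}. etaup n k l p * (M l j - M0 l j)) = 0"
      proof
        fix k assume k: "k \<in> {1..n}"
        have "(\<Sum>l\<in>{1..n}. etaup n k l p * (M l j - M0 l j)) =
           (\<Sum>l\<in>{1..n}. etaup n k l p * M l j) - (\<Sum>l\<in>{1..n}. etaup n k l p * M0 l j)"
          by (simp only: right_diff_distrib sum_subtractf)
        note eq = this
        show "(\<Sum>l\<in>{1..n}. etaup n k l p * (M l j - M0 l j)) = 0"
        proof -
          have a: "\<forall>i\<in>{1..n}. \<forall>j\<in>{1..n}. (\<Sum>l\<in>{1..n}. etaup n i l p * M l j) = (if i = j then 1 else 0)"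
            using PM unfolding P_def by (rule conjunct2)
          have b: "\<forall>i\<in>{1..n}. \<forall>j\<in>{1..n}. (\<Sum>l\<in>{1..n}. etaup n i l p * M0 l j) = (if i = j then 1 else 0)"
            using PM0 unfolding P_def by (rule conjunct2)
          have j: "j \<in> {1..n}" using True by (rule conjunct2)
          have "(\<Sum>l\<in>{1..n}. etaup n k l p * M l j) = (if k = j then 1 else 0)" using a k j by blast
          moreover have "(\<Sum>l\<in>{1..n}. etaup n k l p * M0 l j) = (if k = j then 1 else 0)" using b k j by blast
          ultimately show ?thesis using eq by (simp only: diff_self)
        qed
      qed
      from eta_inj[OF n this] have "\<forall>l\<in>{1..n}. M l j - M0 l j = 0" .
      moreover have "i \<in> {1..n}" using True by (rule conjunct1)
      ultimately have "M i j - M0 i j = 0" by blast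
      thus ?thesis by (simp only: right_minus_eq)
    qed
  qed
  have "P (etalow n p)"
    unfolding etalow_def P_def[symmetric] using PM0 uniq by (rule theI)
  have n1: "n - 1 \<in> {1..n}" using n by auto
  have "\<forall>k\<in>{1..n}. (\<Sum>l\<in>{1..n}. etaup n k l p * (etalow n p l (n - 1) - dtau n l p)) = 0"
  proof
    fix k assume k: "k \<in> {1..n}"
    have "(\<Sum>l\<in>{1..n}. etaup n k l p * (etalow n p l (n - 1) - dtau n l p)) =
       (\<Sum>l\<in>{1..n}. etaup n k l p * etalow n p l (n - 1)) - (\<Sum>l\<in>{1..n}. etaup n k l p * dtau n l p)"
      by (simp only: right_diff_distrib sum_subtractf)
    moreover have "(\<Sum>l\<in>{1..n}. etaup n k l p * etalow n p l (n - 1)) = (if k = n - 1 then 1 else 0)"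
    proof -
      have a: "\<forall>i\<in>{1..n}. \<forall>j\<in>{1..n}. (\<Sum>l\<in>{1..n}. etaup n i l p * etalow n p l j) = (if i = j then 1 else 0)"
        using \<open>P (etalow n p)\<close> unfolding P_def by (rule conjunct2)
      show ?thesis using a k n1 by blast
    qed
    ultimately show "(\<Sum>l\<in>{1..n}. etaup n k l p * (etalow n p l (n - 1) - dtau n l p)) = 0"
      using w_sol[OF n k] by simp
  qed
  from eta_inj[OF n this] have d: "\<forall>l\<in>{1..n}. etalow n p l (n - 1) - dtau n l p = 0" .
  show ?thesis
  proof
    fix l assume "l \<in> {1..n}"
    with d have "etalow n p l (n - 1) - dtau n l p = 0" by blast
    thus "etalow n p l (n - 1) = dtau n l p" by (simp only: right_minus_eq)
  qed
qed

theorem mainTheorem16: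
  fixes n :: nat and p :: "nat \<Rightarrow> complex"
  assumes "n \<ge> 2"
    and "\<forall>k\<in>{1..n}. p k \<noteq> 0"
  shows "\<forall>i\<in>{1..n}. EE n i p =
           (\<Sum>l\<in>{1..n}. \<Sum>j\<in>{1..n}. gup n i l p * etalow n p l j * evec n j)"
proof
  fix i assume i: "i \<in> {1..n}"
  have n1: "n - 1 \<in> {1..n}" using assms(1) by auto
  have inner: "(\<Sum>j\<in>{1..n}. gup n i l p * etalow n p l j * evec n j) = gup n i l p * etalow n p l (n - 1)" for l
  proof -
    have "(\<Sum>j\<in>{1..n}. gup n i l p * etalow n p l j * evec n j) =
        (\<Sum>j\<in>{1..n}. if j = n - 1 then gup n i l p * etalow n p l (n - 1) else 0)"
      by (intro sum.cong) (auto simp: evec_def)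
    also have "\<dots> = gup n i l p * etalow n p l (n - 1)" using n1 by (simp add: sum.delta)
    finally show ?thesis .
  qed
  have "(\<Sum>l\<in>{1..n}. \<Sum>j\<in>{1..n}. gup n i l p * etalow n p l j * evec n j) =
      (\<Sum>l\<in>{1..n}. gup n i l p * dtau n l p)"
    unfolding inner using etalow_col[OF assms(1)] by (intro sum.cong) auto
  thus "EE n i p = (\<Sum>l\<in>{1..n}. \<Sum>j\<in>{1..n}. gup n i l p * etalow n p l j * evec n j)"
    by (simp add: EE_def)
qed

end
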